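(* Let $\mathcal G$ be a weighted timed game and $\rho=(s_1,r_1)\xrightarrow{\delta_1}(s_2,r_2)\xrightarrow{\delta_2}\cdots\xrightarrow{\delta_n}(s_{n+1},r_{n+1})=(s_1,r_1)$ a cycle of the region automaton $\mathcal R(\mathcal G)$. Let $\overline\pi=(s_1,\nu_0)\xrightarrow{d_1,\delta_1}(s_2,\nu_1)\cdots\xrightarrow{d_n,\delta_n}(s_1,\nu_n)$ be a finite play of the closed game $\overline{\mathcal G}$ following $\overline\rho$ and jumping from corners to corners, with $\nu_0,\nu_n$ corners of $r_1$. Then for every $\varepsilon>0$ there exists a finite play $\pi$ of $\mathcal G$ following $\rho$ such that $|\omega(\pi)-\omega(\overline\pi)|\le\varepsilon$.
   Context: Clocks $X$, valuations $\nu\colon X\to\mathbb R_{\ge0}$, time elapse $\nu+d$, reset $\nu[Y\leftarrow0]$; guards are conjunctions of $x\bowtie c$ with ${\bowtie}\in\{\le,<,=,>,\ge\}$, $c\in\mathbb N$. A weighted timed game $\mathcal G=\langle S=S_{\mathrm{Min}}\uplus S_{\mathrm{Max}},S_T,\Delta,\omega\rangle$ has finite states, finite transitions $\Delta\subseteq S\times\mathrm{Guards}(X)\times2^X\times S$, weights $\omega\colon\Delta\uplus S\to\mathbb Z$, and clocks bounded by $M\in\mathbb N$ (every guard implies $\nu(x)\le M$ for all $x$). A step $(s,\nu)\xrightarrow{d,\delta}(s',\nu')$ with $\delta=(s,g,Y,s')$ requires $d\ge0$, $\nu+d\models g$, $\nu'=(\nu+d)[Y\leftarrow0]$, and has weight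 $d\,\omega(s)+\omega(\delta)$; the weight $\omega(\cdot)$ of a finite play is the sum of its step weights. Regions: standard Alur–Dill regions for clocks $X$ and constant $M$; $[\nu]$ is the region of $\nu$; $\overline r$ is the topological closure of $r$; the corners of $r$ are the valuations in $\overline r\cap\mathbb N^X$. The region automaton $\mathcal R(\mathcal G)$ has states $(s,r)$ and transitions $(s,r)\xrightarrow{\delta}(s',r')$, $\delta=(s,g,Y,s')$, if some $\nu\in r$, $d\ge0$ satisfy $\nu+d\models g$ and $(\nu+d)[Y\leftarrow0]\in r'$; a cycle is a path whose first and last states coincide. A play of $\mathcal G$ follows a path if it fires the same transitions and its successive configurations $(s,\nu)$ have $(s,[\nu])$ equal to the successive states of the path. The closed game $\overline{\mathcal G}$ is $\mathcal G$ with every strict inequality in guards replaced by the corresponding non-strict one. The play $\overline\pi$ of $\overline{\mathcal G}$ follows $\overline\rho$ and jumps from corners to corners if, for each $i\in\{1,\dots,n\}$, writing $\delta_i=(s_i,g_i,Y_i,s_{i+1})$, there is a region $r_i''$ such that some valuation of $r_i$ reaches $r_i''$ by time elapse, $r_i''$ satisfies $g_i$, $r_i''[Y_i\leftarrow0]=r_{i+1}$, and $\nu_{i-1}\in\overline{r_i}$, $\nu_{i-1}+d_i\in\overline{r_i''}$, $\nu_i\in\overline{r_{i+1}}$, with all valuations $\nu_{i-1},\nu_{i-1}+d_i,\nu_i$ in $\mathbb N^X$ (hence $\omega(\overline\pi)\in\mathbb Z$). *)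

theory Defs
  imports "HOL-Analysis.Analysis"
begin

type_synonym 'c valuation = "'c \<Rightarrow> real"

definition nonneg_val :: "'c valuation \<Rightarrow> bool" where
  "nonneg_val \<nu> \<longleftrightarrow> (\<forall>x. 0 \<le> \<nu> x)"

definition delay :: "'c valuation \<Rightarrow> real \<Rightarrow> 'c valuation" where
  "delay \<nu> d = (\<lambda>x. \<nu> x + d)"

definition reset :: "'c valuation \<Rightarrow> 'c set \<Rightarrow> 'c valuation" where
  "reset \<nu> Y = (\<lambda>x. if x \<in> Y then 0 else \<nu> x)"

datatype cmp = Lt | Le | Eq | Ge | Gt

type_synonym 'c guard = "('c \<times> cmp \<times> nat) list"

fun sat_cmp :: "real \<Rightarrow> cmp \<Rightarrow> nat \<Rightarrow> bool" where
  "sat_cmp v Lt c = (v < real c)"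
| "sat_cmp v Le c = (v \<le> real c)"
| "sat_cmp v Eq c = (v = real c)"
| "sat_cmp v Ge c = (v \<ge> real c)"
| "sat_cmp v Gt c = (v > real c)"

definition sat :: "'c valuation \<Rightarrow> 'c guard \<Rightarrow> bool" where
  "sat \<nu> g \<longleftrightarrow> (\<forall>(x, b, c) \<in> set g. sat_cmp (\<nu> x) b c)"

fun close_cmp :: "cmp \<Rightarrow> cmp" where
  "close_cmp Lt = Le"
| "close_cmp Gt = Ge"
| "close_cmp b = b"

definition close_guard :: "'c guard \<Rightarrow> 'c guard" where
  "close_guard g = map (\<lambda>(x, b, c). (x, close_cmp b, c)) g"

type_synonym ('s, 'c) transition = "'s \<times> 'c guard \<times> 'c set \<times> 's"

record ('s, 'c) wtg =
  Smin :: "'s set"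
  Smax :: "'s set"
  Starget :: "'s set"
  Trans :: "('s, 'c) transition set"
  wstate :: "'s \<Rightarrow> int"
  wtrans :: "('s, 'c) transition \<Rightarrow> int"

definition states :: "('s, 'c) wtg \<Rightarrow> 's set" where
  "states G = Smin G \<union> Smax G"

definition guard_of :: "('s, 'c) transition \<Rightarrow> 'c guard" where
  "guard_of \<delta> = fst (snd \<delta>)"

definition resets_of :: "('s, 'c) transition \<Rightarrow> 'c set" where
  "resets_of \<delta> = fst (snd (snd \<delta>))"

definition src :: "('s, 'c) transition \<Rightarrow> 's" where
  "src \<delta> = fst \<delta>"

definition tgt :: "('s, 'c) transition \<Rightarrow> 's" where
  "tgt \<delta> = snd (snd (snd \<delta>))"

definition wf_wtg :: "('s, 'c::finite) wtg \<Rightarrow> nat \<Rightarrow> bool" where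
  "wf_wtg G M \<longleftrightarrow>
     finite (Smin G) \<and> finite (Smax G) \<and> Smin G \<inter> Smax G = {} \<and>
     Starget G \<subseteq> states G \<and> finite (Trans G) \<and>
     (\<forall>\<delta> \<in> Trans G. src \<delta> \<in> states G \<and> tgt \<delta> \<in> states G) \<and>
     (\<forall>\<delta> \<in> Trans G. \<forall>\<nu>. sat \<nu> (guard_of \<delta>) \<longrightarrow> (\<forall>x. \<nu> x \<le> real M))"

(* a step (s,\<nu>) --d,\<delta>--> (s',\<nu>'); the flag cl selects the closed game \<overline>G,
   where each guard is replaced by its closure (same transitions, same weights) *)
definition step :: "bool \<Rightarrow> ('s, 'c) wtg \<Rightarrow> 's \<Rightarrow> 'c valuation \<Rightarrow> real \<Rightarrow> ('s, 'c) transition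
                     \<Rightarrow> 's \<Rightarrow> 'c valuation \<Rightarrow> bool" where
  "step cl G s \<nu> d \<delta> s' \<nu>' \<longleftrightarrow>
     \<delta> \<in> Trans G \<and> src \<delta> = s \<and> tgt \<delta> = s' \<and> d \<ge> 0 \<and>
     sat (delay \<nu> d) (if cl then close_guard (guard_of \<delta>) else guard_of \<delta>) \<and>
     \<nu>' = reset (delay \<nu> d) (resets_of \<delta>)"

definition play_weight :: "('s, 'c) wtg \<Rightarrow> nat \<Rightarrow> (nat \<Rightarrow> 's) \<Rightarrow> (nat \<Rightarrow> real)
                            \<Rightarrow> (nat \<Rightarrow> ('s, 'c) transition) \<Rightarrow> real" where
  "play_weight G n ss ds \<delta>s =
     (\<Sum>i = 1..n. ds i * real_of_int (wstate G (ss i)) + real_of_int (wtrans G (\<delta>s i)))"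

(* valuations \<nu>_0..\<nu>_n, delays d_1..d_n: a finite play of the game (closed if cl)
   through states s_1..s_{n+1} firing \<delta>_1..\<delta>_n *)
definition is_play :: "bool \<Rightarrow> ('s, 'c) wtg \<Rightarrow> nat \<Rightarrow> (nat \<Rightarrow> 's) \<Rightarrow> (nat \<Rightarrow> ('s, 'c) transition)
                        \<Rightarrow> (nat \<Rightarrow> 'c valuation) \<Rightarrow> (nat \<Rightarrow> real) \<Rightarrow> bool" where
  "is_play cl G n ss \<delta>s \<nu>s ds \<longleftrightarrow>
     nonneg_val (\<nu>s 0) \<and>
     (\<forall>i \<in> {1..n}. step cl G (ss i) (\<nu>s (i - 1)) (ds i) (\<delta>s i) (ss (Suc i)) (\<nu>s i))"

definition region_equiv :: "nat \<Rightarrow> 'c valuation \<Rightarrow> 'c valuation \<Rightarrow> bool" where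
  "region_equiv M \<nu> \<nu>' \<longleftrightarrow>
     (\<forall>x. (\<nu> x > real M \<longleftrightarrow> \<nu>' x > real M)) \<and>
     (\<forall>x. \<nu> x \<le> real M \<longrightarrow>
          \<lfloor>\<nu> x\<rfloor> = \<lfloor>\<nu>' x\<rfloor> \<and> (frac (\<nu> x) = 0 \<longleftrightarrow> frac (\<nu>' x) = 0)) \<and>
     (\<forall>x y. \<nu> x \<le> real M \<longrightarrow> \<nu> y \<le> real M \<longrightarrow>
          (frac (\<nu> x) \<le> frac (\<nu> y) \<longleftrightarrow> frac (\<nu>' x) \<le> frac (\<nu>' y)))"

definition region_of :: "nat \<Rightarrow> 'c valuation \<Rightarrow> 'c valuation set" where
  "region_of M \<nu> = {\<nu>'. nonneg_val \<nu>' \<and> region_equiv M \<nu> \<nu>'}"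

definition regions :: "nat \<Rightarrow> 'c valuation set set" where
  "regions M = {region_of M \<nu> | \<nu>. nonneg_val \<nu>}"

definition int_val :: "'c valuation \<Rightarrow> bool" where
  "int_val \<nu> \<longleftrightarrow> (\<forall>x. \<nu> x \<in> \<int>)"

definition is_corner :: "'c valuation \<Rightarrow> 'c valuation set \<Rightarrow> bool" where
  "is_corner \<nu> r \<longleftrightarrow> \<nu> \<in> closure r \<and> int_val \<nu>"

definition reg_trans :: "('s, 'c) wtg \<Rightarrow> nat \<Rightarrow> 's \<Rightarrow> 'c valuation set \<Rightarrow> ('s, 'c) transition
                          \<Rightarrow> 's \<Rightarrow> 'c valuation set \<Rightarrow> bool" where
  "reg_trans G M s r \<delta> s' r' \<longleftrightarrow>
     \<delta> \<in> Trans G \<and> src \<delta> = s \<and> tgt \<delta> = s' \<and> r \<in> regions M \<and> r' \<in> regions M \<and>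
     (\<exists>\<nu> \<in> r. \<exists>d \<ge> 0. sat (delay \<nu> d) (guard_of \<delta>) \<and> reset (delay \<nu> d) (resets_of \<delta>) \<in> r')"

definition is_region_cycle :: "('s, 'c) wtg \<Rightarrow> nat \<Rightarrow> nat \<Rightarrow> (nat \<Rightarrow> 's) \<Rightarrow> (nat \<Rightarrow> 'c valuation set)
                                \<Rightarrow> (nat \<Rightarrow> ('s, 'c) transition) \<Rightarrow> bool" where
  "is_region_cycle G M n ss rs \<delta>s \<longleftrightarrow>
     ss (Suc n) = ss 1 \<and> rs (Suc n) = rs 1 \<and> rs 1 \<in> regions M \<and>
     (\<forall>i \<in> {1..n}. reg_trans G M (ss i) (rs i) (\<delta>s i) (ss (Suc i)) (rs (Suc i)))"

definition follows :: "nat \<Rightarrow> nat \<Rightarrow> (nat \<Rightarrow> 'c valuation set) \<Rightarrow> (nat \<Rightarrow> 'c valuation) \<Rightarrow> bool" where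
  "follows M n rs \<nu>s \<longleftrightarrow> (\<forall>i \<in> {1..Suc n}. region_of M (\<nu>s (i - 1)) = rs i)"

definition follows_corners :: "('s, 'c) wtg \<Rightarrow> nat \<Rightarrow> nat \<Rightarrow> (nat \<Rightarrow> 'c valuation set)
      \<Rightarrow> (nat \<Rightarrow> ('s, 'c) transition) \<Rightarrow> (nat \<Rightarrow> 'c valuation) \<Rightarrow> (nat \<Rightarrow> real) \<Rightarrow> bool" where
  "follows_corners G M n rs \<delta>s \<nu>s ds \<longleftrightarrow>
     (\<forall>i \<in> {1..n}. \<exists>r'' \<in> regions M.
        (\<exists>\<nu> \<in> rs i. \<exists>d \<ge> 0. delay \<nu> d \<in> r'') \<and>
        (\<forall>\<nu> \<in> r''. sat \<nu> (guard_of (\<delta>s i))) \<and>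
        (\<lambda>\<nu>. reset \<nu> (resets_of (\<delta>s i))) ` r'' = rs (Suc i) \<and>
        \<nu>s (i - 1) \<in> closure (rs i) \<and> delay (\<nu>s (i - 1)) (ds i) \<in> closure r'' \<and>
        \<nu>s i \<in> closure (rs (Suc i)) \<and>
        int_val (\<nu>s (i - 1)) \<and> int_val (delay (\<nu>s (i - 1)) (ds i)) \<and> int_val (\<nu>s i))"

end

theory Submission
  imports Defs
begin


lemma int_frac0: "frac (a::real) = 0 \<longleftrightarrow> a = of_int \<lfloor>a\<rfloor>"
  unfolding frac_def by simp

lemma gt_int_iff:
  fixes a b :: real
  assumes "\<lfloor>a\<rfloor> = \<lfloor>b\<rfloor>" "frac a = 0 \<longleftrightarrow> frac b = 0"
  shows "a > real M \<longleftrightarrow> b > real M"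
proof -
  have "\<lceil>a\<rceil> = \<lceil>b\<rceil>" using assms unfolding ceiling_altdef int_frac0 by simp
  moreover have "a \<le> real M \<longleftrightarrow> \<lceil>a\<rceil> \<le> int M" "b \<le> real M \<longleftrightarrow> \<lceil>b\<rceil> \<le> int M"
    by (simp_all add: ceiling_le_iff)
  ultimately show ?thesis by (metis not_le)
qed

lemma region_equiv_refl: "region_equiv M \<nu> \<nu>"
  by (simp add: region_equiv_def)

lemma region_equiv_sym: assumes "region_equiv M \<nu> \<mu>" shows "region_equiv M \<mu> \<nu>"
proof -
  have A: "\<forall>x. (\<nu> x > real M \<longleftrightarrow> \<mu> x > real M)" using assms by (simp add: region_equiv_def)
  hence B: "\<And>x. \<mu> x \<le> real M \<Longrightarrow> \<nu> x \<le> real M" by (meson not_le)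
  have C: "\<forall>x. \<nu> x \<le> real M \<longrightarrow>
          \<lfloor>\<nu> x\<rfloor> = \<lfloor>\<mu> x\<rfloor> \<and> (frac (\<nu> x) = 0 \<longleftrightarrow> frac (\<mu> x) = 0)"
    and D: "\<forall>x y. \<nu> x \<le> real M \<longrightarrow> \<nu> y \<le> real M \<longrightarrow>
          (frac (\<nu> x) \<le> frac (\<nu> y) \<longleftrightarrow> frac (\<mu> x) \<le> frac (\<mu> y))"
    using assms by (simp_all add: region_equiv_def)
  have 1: "\<forall>x. (\<mu> x > real M \<longleftrightarrow> \<nu> x > real M)" using A by simp
  have 2: "\<forall>x. \<mu> x \<le> real M \<longrightarrow>
          \<lfloor>\<mu> x\<rfloor> = \<lfloor>\<nu> x\<rfloor> \<and> (frac (\<mu> x) = 0 \<longleftrightarrow> frac (\<nu> x) = 0)"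
    using B C by simp
  have 3: "\<forall>x y. \<mu> x \<le> real M \<longrightarrow> \<mu> y \<le> real M \<longrightarrow>
          (frac (\<mu> x) \<le> frac (\<mu> y) \<longleftrightarrow> frac (\<nu> x) \<le> frac (\<nu> y))"
    using B D by simp
  show ?thesis using 1 2 3 unfolding region_equiv_def by blast
qed

lemma region_equiv_trans: assumes "region_equiv M \<nu> \<mu>" "region_equiv M \<mu> \<eta>" shows "region_equiv M \<nu> \<eta>"
proof -
  have A: "\<forall>x. (\<nu> x > real M \<longleftrightarrow> \<mu> x > real M)" "\<forall>x. (\<mu> x > real M \<longleftrightarrow> \<eta> x > real M)"
    using assms by (simp_all add: region_equiv_def)
  hence B: "\<And>x. \<nu> x \<le> real M \<Longrightarrow> \<mu> x \<le> real M" by (meson not_le)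
  have C: "\<forall>x. \<nu> x \<le> real M \<longrightarrow>
          \<lfloor>\<nu> x\<rfloor> = \<lfloor>\<mu> x\<rfloor> \<and> (frac (\<nu> x) = 0 \<longleftrightarrow> frac (\<mu> x) = 0)"
    "\<forall>x. \<mu> x \<le> real M \<longrightarrow>
          \<lfloor>\<mu> x\<rfloor> = \<lfloor>\<eta> x\<rfloor> \<and> (frac (\<mu> x) = 0 \<longleftrightarrow> frac (\<eta> x) = 0)"
    and D: "\<forall>x y. \<nu> x \<le> real M \<longrightarrow> \<nu> y \<le> real M \<longrightarrow>
          (frac (\<nu> x) \<le> frac (\<nu> y) \<longleftrightarrow> frac (\<mu> x) \<le> frac (\<mu> y))"
     "\<forall>x y. \<mu> x \<le> real M \<longrightarrow> \<mu> y \<le> real M \<longrightarrow>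
          (frac (\<mu> x) \<le> frac (\<mu> y) \<longleftrightarrow> frac (\<eta> x) \<le> frac (\<eta> y))"
    using assms by (simp_all add: region_equiv_def)
  have 1: "\<forall>x. (\<nu> x > real M \<longleftrightarrow> \<eta> x > real M)" using A by simp
  have 2: "\<forall>x. \<nu> x \<le> real M \<longrightarrow>
          \<lfloor>\<nu> x\<rfloor> = \<lfloor>\<eta> x\<rfloor> \<and> (frac (\<nu> x) = 0 \<longleftrightarrow> frac (\<eta> x) = 0)"
    using B C by simp
  have 3: "\<forall>x y. \<nu> x \<le> real M \<longrightarrow> \<nu> y \<le> real M \<longrightarrow>
          (frac (\<nu> x) \<le> frac (\<nu> y) \<longleftrightarrow> frac (\<eta> x) \<le> frac (\<eta> y))"
    using B D by simp
  show ?thesis using 1 2 3 unfolding region_equiv_def by blast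
qed

lemma region_of_self: "nonneg_val \<nu> \<Longrightarrow> \<nu> \<in> region_of M \<nu>"
  by (simp add: region_of_def region_equiv_refl)

lemma region_of_eq:
  assumes "r \<in> regions M" "w \<in> r" shows "region_of M w = r"
proof -
  obtain \<mu> where r: "r = region_of M \<mu>" "nonneg_val \<mu>" using assms(1) by (auto simp: regions_def)
  have e: "region_equiv M \<mu> w" using assms(2) r by (simp add: region_of_def)
  show ?thesis unfolding r region_of_def
    using e region_equiv_trans region_equiv_sym by blast
qed

lemma region_mem_equiv:
  assumes "r \<in> regions M" "u \<in> r" "v \<in> r" shows "region_equiv M u v" "nonneg_val v"
proof -
  obtain \<mu> where r: "r = region_of M \<mu>" using assms(1) by (auto simp: regions_def)
  have "region_equiv M \<mu> u" "region_equiv M \<mu> v" using assms r by (auto simp: region_of_def)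
  thus "region_equiv M u v" by (meson region_equiv_sym region_equiv_trans)
  show "nonneg_val v" using assms r by (auto simp: region_of_def)
qed

lemma closure_le:
  fixes f g :: "('c \<Rightarrow> real) \<Rightarrow> real"
  assumes "continuous_on UNIV f" "continuous_on UNIV g" "\<forall>z\<in>r. f z \<le> g z" "v \<in> closure r"
  shows "f v \<le> g v"
proof -
  have "closure r \<subseteq> {z. f z \<le> g z}"
    by (rule closure_minimal) (use assms closed_Collect_le in auto)
  thus ?thesis using assms(4) by auto
qed

lemma cont_coord: "continuous_on UNIV (\<lambda>z::'c\<Rightarrow>real. z x)"
  by simp

lemma cont_coord_diff: "continuous_on UNIV (\<lambda>z::'c\<Rightarrow>real. z x - z y)"
  by (intro continuous_on_diff) simp_all

lemma cont_const: "continuous_on UNIV (\<lambda>z::'c\<Rightarrow>real. c)"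
  by simp


lemma cl_ineq:
  fixes r :: "('c \<Rightarrow> real) set"
  assumes "\<forall>z\<in>r. a * z x + b * z y \<le> c" "v \<in> closure r"
  shows "a * v x + b * v y \<le> c"
proof -
  have "continuous_on UNIV (\<lambda>z::'c\<Rightarrow>real. a * z x + b * z y)"
    by (intro continuous_on_add continuous_on_mult_left continuous_on_product_coordinates)
  thus ?thesis using closure_le[of "\<lambda>z. a * z x + b * z y" "\<lambda>z. c" r v] assms by simp
qed

lemma region_comb:
  assumes r: "r \<in> regions M" and u: "u \<in> r" and v: "v \<in> closure r" and t: "0 \<le> t" "t < 1"
  shows "(\<lambda>x. (1 - t) * u x + t * v x) \<in> r"
proof -
  define w where "w = (\<lambda>x. (1 - t) * u x + t * v x)"
  have eqz: "\<And>z. z \<in> r \<Longrightarrow> region_equiv M u z" and nnz: "\<And>z. z \<in> r \<Longrightarrow> nonneg_val z"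
    using region_mem_equiv[OF r u] by auto
  have nnu: "nonneg_val u" using nnz u .
  have t1: "1 - t > 0" using t by simp
  have nnv: "0 \<le> v x" for x
  proof -
    have "\<forall>z\<in>r. (-1) * z x + 0 * z x \<le> 0" using nnz by (auto simp: nonneg_val_def)
    from cl_ineq[OF this v] show ?thesis by simp
  qed
  have nnw: "nonneg_val w" using nnu nnv t unfolding w_def nonneg_val_def by auto
  have big: "w x > real M" if "u x > real M" for x
  proof -
    have "\<forall>z\<in>r. (-1) * z x + 0 * z x \<le> - real M"
      using eqz that by (force simp: region_equiv_def)
    from cl_ineq[OF this v] have "v x \<ge> real M" by simp
    have "(1 - t) * u x > (1 - t) * real M" using that t1 by simp
    moreover have "t * v x \<ge> t * real M" using \<open>v x \<ge> real M\<close> t by (simp add: mult_left_mono)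
    ultimately show ?thesis unfolding w_def by (simp add: algebra_simps)
  qed
  have small: "of_int \<lfloor>u x\<rfloor> \<le> w x \<and> w x < of_int \<lfloor>u x\<rfloor> + 1 \<and> (w x = of_int \<lfloor>u x\<rfloor> \<longleftrightarrow> u x = of_int \<lfloor>u x\<rfloor>)"
    if ux: "u x \<le> real M" for x
  proof -
    define m where "m = real_of_int \<lfloor>u x\<rfloor>"
    have zfl: "\<And>z. z \<in> r \<Longrightarrow> \<lfloor>z x\<rfloor> = \<lfloor>u x\<rfloor> \<and> (frac (z x) = 0 \<longleftrightarrow> frac (u x) = 0)"
      using eqz ux by (simp add: region_equiv_def)
    have zlo: "\<forall>z\<in>r. (-1) * z x + 0 * z x \<le> - m"
      using zfl unfolding m_def by (auto, metis of_int_floor_le)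
    have zhi: "\<forall>z\<in>r. 1 * z x + 0 * z x \<le> m + 1"
      using zfl unfolding m_def by (auto, metis less_eq_real_def real_of_int_floor_add_one_gt)
    have vlo: "m \<le> v x" using cl_ineq[OF zlo v] by simp
    have vhi: "v x \<le> m + 1" using cl_ineq[OF zhi v] by simp
    have ulo: "m \<le> u x" "u x < m + 1" unfolding m_def by linarith+
    show ?thesis
    proof (cases "u x = m")
      case True
      have "\<forall>z\<in>r. 1 * z x + 0 * z x \<le> m"
        using zfl True unfolding m_def int_frac0 by (metis add.right_neutral mult_1 mult_zero_left order_refl)
      from cl_ineq[OF this v] have "v x \<le> m" by simp
      hence "v x = m" using vlo by simp
      hence "w x = m" unfolding w_def using True by (simp add: algebra_simps)
      thus ?thesis using True unfolding m_def by simp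
    next
      case False
      hence "u x > m" using ulo by simp
      have "w x > m"
      proof -
        have "(1 - t) * u x > (1 - t) * m" using \<open>u x > m\<close> t1 by simp
        moreover have "t * v x \<ge> t * m" using vlo t by (simp add: mult_left_mono)
        ultimately show ?thesis unfolding w_def by (simp add: algebra_simps)
      qed
      moreover have "w x < m + 1"
      proof -
        have "(1 - t) * u x < (1 - t) * (m + 1)" using ulo t1 by simp
        moreover have "t * v x \<le> t * (m + 1)" using vhi t by (simp add: mult_left_mono)
        ultimately show ?thesis unfolding w_def by (simp add: algebra_simps)
      qed
      ultimately show ?thesis using False unfolding m_def by simp
    qed
  qed
  have flw: "\<lfloor>w x\<rfloor> = \<lfloor>u x\<rfloor>" "frac (w x) = w x - of_int \<lfloor>u x\<rfloor>"
     "frac (w x) = 0 \<longleftrightarrow> frac (u x) = 0" if "u x \<le> real M" for x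
  proof -
    from small[OF that] show 1: "\<lfloor>w x\<rfloor> = \<lfloor>u x\<rfloor>" by linarith
    thus "frac (w x) = w x - of_int \<lfloor>u x\<rfloor>" by (simp add: frac_def)
    show "frac (w x) = 0 \<longleftrightarrow> frac (u x) = 0" using small[OF that] 1 unfolding int_frac0 by simp
  qed
  have gtw: "w x > real M \<longleftrightarrow> u x > real M" for x
  proof (cases "u x > real M")
    case True thus ?thesis using big by simp
  next
    case False thus ?thesis using gt_int_iff[of "w x" "u x" M] flw[of x] by simp
  qed
  have ordw: "frac (u x) \<le> frac (u y) \<longleftrightarrow> frac (w x) \<le> frac (w y)"
    if ux: "u x \<le> real M" and uy: "u y \<le> real M" for x y
  proof -
    define mx where "mx = real_of_int \<lfloor>u x\<rfloor>"
    define my where "my = real_of_int \<lfloor>u y\<rfloor>"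
    have zf: "\<And>z. z \<in> r \<Longrightarrow> frac (z x) = z x - mx \<and> frac (z y) = z y - my"
      using eqz ux uy unfolding mx_def my_def region_equiv_def by (simp add: frac_def)
    have uf: "frac (u x) = u x - mx" "frac (u y) = u y - my" unfolding mx_def my_def by (simp_all add: frac_def)
    have wf: "frac (w x) = w x - mx" "frac (w y) = w y - my" using flw ux uy unfolding mx_def my_def by auto
    have zo1: "\<And>z. z \<in> r \<Longrightarrow> (frac (u x) \<le> frac (u y) \<longleftrightarrow> frac (z x) \<le> frac (z y))"
      using eqz ux uy unfolding region_equiv_def by blast
    have zo2: "\<And>z. z \<in> r \<Longrightarrow> (frac (u y) \<le> frac (u x) \<longleftrightarrow> frac (z y) \<le> frac (z x))"
      using eqz ux uy unfolding region_equiv_def by blast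
    have wx: "w x - mx = (1 - t) * (u x - mx) + t * (v x - mx)" unfolding w_def by (simp add: algebra_simps)
    have wy: "w y - my = (1 - t) * (u y - my) + t * (v y - my)" unfolding w_def by (simp add: algebra_simps)
    have A: "(w x - mx) - (w y - my) = (1 - t) * ((u x - mx) - (u y - my)) + t * ((v x - mx) - (v y - my))"
      unfolding wx wy by (simp add: algebra_simps)
    consider "u x - mx < u y - my" | "u x - mx = u y - my" | "u x - mx > u y - my" by linarith
    thus ?thesis
    proof cases
      case 1
      have "\<forall>z\<in>r. 1 * z x + (-1) * z y \<le> mx - my"
        using zo1 zf 1 uf by force
      from cl_ineq[OF this v] have "(v x - mx) - (v y - my) \<le> 0" by simp
      moreover have "(1 - t) * ((u x - mx) - (u y - my)) < 0" using 1 t1 by (simp add: mult_pos_neg)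
      moreover have "t * ((v x - mx) - (v y - my)) \<le> 0" using calculation(1) t by (simp add: mult_nonneg_nonpos)
      ultimately have "(w x - mx) - (w y - my) < 0" unfolding A by linarith
      thus ?thesis using 1 uf wf by simp
    next
      case 2
      have "\<forall>z\<in>r. 1 * z x + (-1) * z y \<le> mx - my"
        using zo1 zf 2 uf by force
      from cl_ineq[OF this v] have a: "(v x - mx) - (v y - my) \<le> 0" by simp
      have "\<forall>z\<in>r. 1 * z y + (-1) * z x \<le> my - mx"
        using zo2 zf 2 uf by force
      from cl_ineq[OF this v] have "(v x - mx) - (v y - my) \<ge> 0" by simp
      hence "(w x - mx) - (w y - my) = 0" unfolding A using 2 a by simp
      thus ?thesis using 2 uf wf by simp
    next
      case 3
      have "\<forall>z\<in>r. 1 * z y + (-1) * z x \<le> my - mx"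
        using zo2 zf 3 uf by force
      from cl_ineq[OF this v] have "(v x - mx) - (v y - my) \<ge> 0" by simp
      moreover have "(1 - t) * ((u x - mx) - (u y - my)) > 0" using 3 t1 by simp
      moreover have "t * ((v x - mx) - (v y - my)) \<ge> 0" using calculation(1) t by simp
      ultimately have "(w x - mx) - (w y - my) > 0" unfolding A by linarith
      thus ?thesis using 3 uf wf by simp
    qed
  qed
  have "region_equiv M u w"
    unfolding region_equiv_def
    using gtw flw ordw by (metis not_le)
  hence "w \<in> region_of M u" using nnw by (simp add: region_of_def)
  thus ?thesis using region_of_eq[OF r u] unfolding w_def by simp
qed



lemma shift_ff:
  fixes m :: int and \<alpha> f :: real
  assumes "0 \<le> \<alpha>" "\<alpha> < 1" "0 \<le> f" "f < 1"
  shows "\<lfloor>of_int m + \<alpha> + f\<rfloor> = (if \<alpha> + f < 1 then m else m + 1)"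
    "frac (of_int m + \<alpha> + f) = (if \<alpha> + f < 1 then \<alpha> + f else \<alpha> + f - 1)"
proof -
  show 1: "\<lfloor>of_int m + \<alpha> + f\<rfloor> = (if \<alpha> + f < 1 then m else m + 1)"
    using assms by (auto simp: floor_eq_iff)
  show "frac (of_int m + \<alpha> + f) = (if \<alpha> + f < 1 then \<alpha> + f else \<alpha> + f - 1)"
    unfolding frac_def 1 by auto
qed

lemma decomp: "(a::real) = of_int \<lfloor>a\<rfloor> + frac a"
  by (simp add: frac_def)

lemma exists_b:
  fixes \<mu> \<nu> :: "'c::finite valuation" and a :: real
  assumes eq: "region_equiv M \<mu> \<nu>" and a: "0 < a" "a \<le> 1"
  shows "\<exists>b. 0 < b \<and> b \<le> 1 \<and> (b = 1 \<longleftrightarrow> a = 1) \<and>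
     (\<forall>x. \<mu> x \<le> real M \<longrightarrow> (frac (\<mu> x) < a \<longleftrightarrow> frac (\<nu> x) < b) \<and> (frac (\<mu> x) = a \<longleftrightarrow> frac (\<nu> x) = b))"
proof -
  have ord: "frac (\<mu> x) \<le> frac (\<mu> y) \<longleftrightarrow> frac (\<nu> x) \<le> frac (\<nu> y)" if "\<mu> x \<le> real M" "\<mu> y \<le> real M" for x y
    using eq that unfolding region_equiv_def by blast
  have z: "frac (\<mu> x) = 0 \<longleftrightarrow> frac (\<nu> x) = 0" if "\<mu> x \<le> real M" for x
    using eq that unfolding region_equiv_def by blast
  have f1: "frac (\<nu> x) < 1" "frac (\<mu> x) < 1" "frac (\<nu> x) \<ge> 0" for x by (simp_all add: frac_lt_1)
  show ?thesis
  proof (cases "\<exists>x0. \<mu> x0 \<le> real M \<and> frac (\<mu> x0) = a")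
    case True
    then obtain x0 where x0: "\<mu> x0 \<le> real M" "frac (\<mu> x0) = a" by blast
    have "a < 1" using x0 f1 by metis
    have "frac (\<nu> x0) \<noteq> 0" using z[OF x0(1)] x0 a by simp
    hence "frac (\<nu> x0) > 0" using f1(3)[of x0] by linarith
    moreover have "\<forall>x. \<mu> x \<le> real M \<longrightarrow> (frac (\<mu> x) < a \<longleftrightarrow> frac (\<nu> x) < frac (\<nu> x0)) \<and> (frac (\<mu> x) = a \<longleftrightarrow> frac (\<nu> x) = frac (\<nu> x0))"
    proof (intro allI impI)
      fix x assume "\<mu> x \<le> real M"
      from ord[OF this x0(1)] ord[OF x0(1) this] x0(2)
      show "(frac (\<mu> x) < a \<longleftrightarrow> frac (\<nu> x) < frac (\<nu> x0)) \<and> (frac (\<mu> x) = a \<longleftrightarrow> frac (\<nu> x) = frac (\<nu> x0))"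
        by auto
    qed
    ultimately show ?thesis using f1(1)[of x0] \<open>a < 1\<close> by (intro exI[of _ "frac (\<nu> x0)"]) auto
  next
    case nox: False
    show ?thesis
    proof (cases "a = 1")
      case True
      thus ?thesis using f1 by (intro exI[of _ 1]) (metis less_irrefl order_refl zero_less_one)
    next
      case False
      hence a1: "a < 1" using a by simp
      define L where "L = insert 0 ((\<lambda>x. frac (\<nu> x)) ` {x. \<mu> x \<le> real M \<and> frac (\<mu> x) < a})"
      define U where "U = insert 1 ((\<lambda>x. frac (\<nu> x)) ` {x. \<mu> x \<le> real M \<and> frac (\<mu> x) > a})"
      have fin: "finite L" "finite U" "L \<noteq> {}" "U \<noteq> {}" unfolding L_def U_def by auto
      have lu: "l < u" if "l \<in> L" "u \<in> U" for l u
      proof -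
        have upos: "frac (\<nu> y) > 0" if "\<mu> y \<le> real M" "frac (\<mu> y) > a" for y
        proof -
          have "frac (\<mu> y) \<noteq> 0" using that a by linarith
          hence "frac (\<nu> y) \<noteq> 0" using z[OF that(1)] by simp
          thus ?thesis using f1(3)[of y] by linarith
        qed
        have lt: "frac (\<nu> x) < frac (\<nu> y)" if "\<mu> x \<le> real M" "frac (\<mu> x) < a" "\<mu> y \<le> real M" "frac (\<mu> y) > a" for x y
          using ord[OF that(3) that(1)] that(2,4) by linarith
        show ?thesis using that unfolding L_def U_def using upos lt f1 by auto
      qed
      define b where "b = (Max L + Min U) / 2"
      have mm: "Max L < Min U" using lu fin Max_in Min_in by blast
      have "0 \<le> Max L" using fin unfolding L_def by (simp add: Max_ge)
      have "Min U \<le> 1" using fin unfolding U_def by (simp add: Min_le)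
      have bL: "l < b" if "l \<in> L" for l using Max_ge[OF fin(1) that] mm unfolding b_def by (simp add: field_simps)
      have bU: "b < u" if "u \<in> U" for u using Min_le[OF fin(2) that] mm unfolding b_def by (simp add: field_simps)
      have "0 < b" "b < 1" using bL[of 0] bU[of 1] unfolding L_def U_def by auto
      moreover have "\<forall>x. \<mu> x \<le> real M \<longrightarrow> (frac (\<mu> x) < a \<longleftrightarrow> frac (\<nu> x) < b) \<and> (frac (\<mu> x) = a \<longleftrightarrow> frac (\<nu> x) = b)"
      proof (intro allI impI)
        fix x assume x: "\<mu> x \<le> real M"
        have "frac (\<mu> x) \<noteq> a" using nox x by blast
        show "(frac (\<mu> x) < a \<longleftrightarrow> frac (\<nu> x) < b) \<and> (frac (\<mu> x) = a \<longleftrightarrow> frac (\<nu> x) = b)"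
        proof (cases "frac (\<mu> x) < a")
          case True
          hence "frac (\<nu> x) \<in> L" using x unfolding L_def by blast
          thus ?thesis using bL True by fastforce
        next
          case False
          hence "frac (\<mu> x) > a" using \<open>frac (\<mu> x) \<noteq> a\<close> by simp
          hence "frac (\<nu> x) \<in> U" using x unfolding U_def by blast
          thus ?thesis using bU False \<open>frac (\<mu> x) > a\<close> by fastforce
        qed
      qed
      ultimately show ?thesis using a1 by (intro exI[of _ b]) auto
    qed
  qed
qed


lemma delay_frac:
  fixes \<mu> \<nu> :: "'c::finite valuation"
  assumes eq: "region_equiv M \<mu> \<nu>" and f: "0 \<le> f" "f < 1"
  shows "\<exists>g. 0 \<le> g \<and> g < 1 \<and> region_equiv M (delay \<mu> f) (delay \<nu> g)"
proof -
  obtain b where b: "0 < b" "b \<le> 1" "b = 1 \<longleftrightarrow> 1 - f = 1"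
    and bx: "\<And>x. \<mu> x \<le> real M \<Longrightarrow> (frac (\<mu> x) < 1 - f \<longleftrightarrow> frac (\<nu> x) < b) \<and> (frac (\<mu> x) = 1 - f \<longleftrightarrow> frac (\<nu> x) = b)"
    using exists_b[OF eq, of "1 - f"] f by auto
  define g where "g = 1 - b"
  have g: "0 \<le> g" "g < 1" "g = 0 \<longleftrightarrow> f = 0" using b unfolding g_def by auto
  have ord: "frac (\<mu> x) \<le> frac (\<mu> y) \<longleftrightarrow> frac (\<nu> x) \<le> frac (\<nu> y)" if "\<mu> x \<le> real M" "\<mu> y \<le> real M" for x y
    using eq that unfolding region_equiv_def by blast
  have zf: "\<lfloor>\<mu> x\<rfloor> = \<lfloor>\<nu> x\<rfloor> \<and> (frac (\<mu> x) = 0 \<longleftrightarrow> frac (\<nu> x) = 0)" if "\<mu> x \<le> real M" for x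
    using eq that unfolding region_equiv_def by blast
  have gtM: "\<mu> x > real M \<longleftrightarrow> \<nu> x > real M" for x
    using eq unfolding region_equiv_def by blast
  have f1: "frac (\<nu> x) < 1" "frac (\<mu> x) < 1" "frac (\<nu> x) \<ge> 0" "frac (\<mu> x) \<ge> 0" for x by (simp_all add: frac_lt_1)
  have cond: "frac (\<mu> x) + f < 1 \<longleftrightarrow> frac (\<nu> x) + g < 1" if "\<mu> x \<le> real M" for x
    using bx[OF that] unfolding g_def by linarith
  have K: "\<lfloor>delay \<mu> f x\<rfloor> = \<lfloor>delay \<nu> g x\<rfloor> \<and> (frac (delay \<mu> f x) = 0 \<longleftrightarrow> frac (delay \<nu> g x) = 0) \<and>
      frac (delay \<mu> f x) = (if frac (\<mu> x) + f < 1 then frac (\<mu> x) + f else frac (\<mu> x) + f - 1) \<and>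
      frac (delay \<nu> g x) = (if frac (\<mu> x) + f < 1 then frac (\<nu> x) + g else frac (\<nu> x) + g - 1)"
    if x: "\<mu> x \<le> real M" for x
  proof -
    have dm: "delay \<mu> f x = of_int \<lfloor>\<mu> x\<rfloor> + frac (\<mu> x) + f" by (simp add: delay_def frac_def)
    have dn: "delay \<nu> g x = of_int \<lfloor>\<mu> x\<rfloor> + frac (\<nu> x) + g" using zf[OF x] by (simp add: delay_def frac_def)
    note sm = shift_ff[of "frac (\<mu> x)" f "\<lfloor>\<mu> x\<rfloor>"] shift_ff[of "frac (\<nu> x)" g "\<lfloor>\<mu> x\<rfloor>"]
    have s1: "\<lfloor>delay \<mu> f x\<rfloor> = (if frac (\<mu> x) + f < 1 then \<lfloor>\<mu> x\<rfloor> else \<lfloor>\<mu> x\<rfloor> + 1)"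
      "frac (delay \<mu> f x) = (if frac (\<mu> x) + f < 1 then frac (\<mu> x) + f else frac (\<mu> x) + f - 1)"
      unfolding dm using sm f1 f by auto
    have s2: "\<lfloor>delay \<nu> g x\<rfloor> = (if frac (\<mu> x) + f < 1 then \<lfloor>\<mu> x\<rfloor> else \<lfloor>\<mu> x\<rfloor> + 1)"
      "frac (delay \<nu> g x) = (if frac (\<mu> x) + f < 1 then frac (\<nu> x) + g else frac (\<nu> x) + g - 1)"
      unfolding dn using sm f1 g cond[OF x] by auto
    have e1: "frac (\<mu> x) + f = 0 \<longleftrightarrow> frac (\<nu> x) + g = 0"
    proof -
      have "frac (\<mu> x) + f = 0 \<longleftrightarrow> frac (\<mu> x) = 0 \<and> f = 0" using f1[of x] f by linarith
      moreover have "frac (\<nu> x) + g = 0 \<longleftrightarrow> frac (\<nu> x) = 0 \<and> g = 0" using f1[of x] g by linarith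
      ultimately show ?thesis using zf[OF x] g(3) by blast
    qed
    have e2: "frac (\<mu> x) + f - 1 = 0 \<longleftrightarrow> frac (\<nu> x) + g - 1 = 0"
      using bx[OF x] unfolding g_def by linarith
    show ?thesis using s1 s2 e1 e2 by (simp del: frac_eq_0_iff)
  qed
  have R1: "\<forall>x. (delay \<mu> f x > real M \<longleftrightarrow> delay \<nu> g x > real M)"
  proof
    fix x show "delay \<mu> f x > real M \<longleftrightarrow> delay \<nu> g x > real M"
    proof (cases "\<mu> x \<le> real M")
      case True thus ?thesis using K[OF True] gt_int_iff by blast
    next
      case False
      hence "\<nu> x > real M" using gtM[of x] by (simp add: not_le)
      thus ?thesis using False f g by (simp add: delay_def)
    qed
  qed
  have R2: "\<forall>x. delay \<mu> f x \<le> real M \<longrightarrow>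
          \<lfloor>delay \<mu> f x\<rfloor> = \<lfloor>delay \<nu> g x\<rfloor> \<and> (frac (delay \<mu> f x) = 0 \<longleftrightarrow> frac (delay \<nu> g x) = 0)"
  proof (intro allI impI)
    fix x assume "delay \<mu> f x \<le> real M"
    hence "\<mu> x \<le> real M" using f by (simp add: delay_def)
    thus "\<lfloor>delay \<mu> f x\<rfloor> = \<lfloor>delay \<nu> g x\<rfloor> \<and> (frac (delay \<mu> f x) = 0 \<longleftrightarrow> frac (delay \<nu> g x) = 0)"
      using K by blast
  qed
  have R3: "\<forall>x y. delay \<mu> f x \<le> real M \<longrightarrow> delay \<mu> f y \<le> real M \<longrightarrow>
          (frac (delay \<mu> f x) \<le> frac (delay \<mu> f y) \<longleftrightarrow> frac (delay \<nu> g x) \<le> frac (delay \<nu> g y))"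
  proof (intro allI impI)
    fix x y assume "delay \<mu> f x \<le> real M" "delay \<mu> f y \<le> real M"
    hence x: "\<mu> x \<le> real M" and y: "\<mu> y \<le> real M" using f by (simp_all add: delay_def)
    have o: "frac (\<mu> x) \<le> frac (\<mu> y) \<longleftrightarrow> frac (\<nu> x) \<le> frac (\<nu> y)" using ord[OF x y] .
    have cx: "frac (\<mu> x) + f < 1 \<longleftrightarrow> frac (\<nu> x) + g < 1" and cy: "frac (\<mu> y) + f < 1 \<longleftrightarrow> frac (\<nu> y) + g < 1"
      using cond x y by auto
    show "frac (delay \<mu> f x) \<le> frac (delay \<mu> f y) \<longleftrightarrow> frac (delay \<nu> g x) \<le> frac (delay \<nu> g y)"
      unfolding K[OF x, THEN conjunct2, THEN conjunct2, THEN conjunct1]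
        K[OF x, THEN conjunct2, THEN conjunct2, THEN conjunct2]
        K[OF y, THEN conjunct2, THEN conjunct2, THEN conjunct1]
        K[OF y, THEN conjunct2, THEN conjunct2, THEN conjunct2]
      using o cx cy f1[of x] f1[of y] f g by (auto simp del: frac_ge_0)
  qed
  show ?thesis using R1 R2 R3 g unfolding region_equiv_def by blast
qed

lemma delay_int:
  assumes eq: "region_equiv M \<mu> \<nu>"
  shows "region_equiv M (delay \<mu> (real k)) (delay \<nu> (real k))"
proof -
  have zf: "\<lfloor>\<mu> x\<rfloor> = \<lfloor>\<nu> x\<rfloor> \<and> (frac (\<mu> x) = 0 \<longleftrightarrow> frac (\<nu> x) = 0)" if "\<mu> x \<le> real M" for x
    using eq that unfolding region_equiv_def by blast
  have ord: "frac (\<mu> x) \<le> frac (\<mu> y) \<longleftrightarrow> frac (\<nu> x) \<le> frac (\<nu> y)" if "\<mu> x \<le> real M" "\<mu> y \<le> real M" for x y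
    using eq that unfolding region_equiv_def by blast
  have gtM: "\<mu> x > real M \<longleftrightarrow> \<nu> x > real M" for x
    using eq unfolding region_equiv_def by blast
  have fl: "\<lfloor>z + real k\<rfloor> = \<lfloor>z\<rfloor> + int k" "frac (z + real k) = frac z" for z :: real
    by (simp_all add: frac_def)
  have R1: "\<forall>x. (delay \<mu> k x > real M \<longleftrightarrow> delay \<nu> k x > real M)"
  proof
    fix x show "delay \<mu> k x > real M \<longleftrightarrow> delay \<nu> k x > real M"
    proof (cases "\<mu> x \<le> real M")
      case True thus ?thesis using zf[OF True] gt_int_iff[of "\<mu> x + real k" "\<nu> x + real k" M] fl
        by (simp add: delay_def)
    next
      case False
      hence "\<nu> x > real M" using gtM[of x] by (simp add: not_le)
      thus ?thesis using False by (simp add: delay_def)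
    qed
  qed
  have R2: "\<forall>x. delay \<mu> k x \<le> real M \<longrightarrow>
          \<lfloor>delay \<mu> k x\<rfloor> = \<lfloor>delay \<nu> k x\<rfloor> \<and> (frac (delay \<mu> k x) = 0 \<longleftrightarrow> frac (delay \<nu> k x) = 0)"
  proof (intro allI impI)
    fix x assume "delay \<mu> k x \<le> real M"
    hence "\<mu> x \<le> real M" by (simp add: delay_def)
    thus "\<lfloor>delay \<mu> k x\<rfloor> = \<lfloor>delay \<nu> k x\<rfloor> \<and> (frac (delay \<mu> k x) = 0 \<longleftrightarrow> frac (delay \<nu> k x) = 0)"
      using zf[of x] unfolding delay_def fl by simp
  qed
  have R3: "\<forall>x y. delay \<mu> k x \<le> real M \<longrightarrow> delay \<mu> k y \<le> real M \<longrightarrow>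
          (frac (delay \<mu> k x) \<le> frac (delay \<mu> k y) \<longleftrightarrow> frac (delay \<nu> k x) \<le> frac (delay \<nu> k y))"
  proof (intro allI impI)
    fix x y assume "delay \<mu> k x \<le> real M" "delay \<mu> k y \<le> real M"
    hence "\<mu> x \<le> real M" "\<mu> y \<le> real M" by (simp_all add: delay_def)
    thus "frac (delay \<mu> k x) \<le> frac (delay \<mu> k y) \<longleftrightarrow> frac (delay \<nu> k x) \<le> frac (delay \<nu> k y)"
      using ord unfolding delay_def fl by simp
  qed
  show ?thesis using R1 R2 R3 unfolding region_equiv_def by blast
qed


lemma delay_any:
  fixes \<mu> \<nu> :: "'c::finite valuation"
  assumes eq: "region_equiv M \<mu> \<nu>" and e: "0 \<le> e"
  shows "\<exists>d\<ge>0. region_equiv M (delay \<mu> e) (delay \<nu> d)"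
proof -
  define k where "k = nat \<lfloor>e\<rfloor>"
  have ek: "e = real k + frac e" using e unfolding k_def frac_def by simp
  obtain g where g: "0 \<le> g" "g < 1" "region_equiv M (delay \<mu> (frac e)) (delay \<nu> g)"
    using delay_frac[OF eq, of "frac e"] by (auto simp: frac_lt_1)
  have "region_equiv M (delay (delay \<mu> (frac e)) (real k)) (delay (delay \<nu> g) (real k))"
    using delay_int[OF g(3)] .
  moreover have "delay (delay \<mu> (frac e)) (real k) = delay \<mu> e"
    using ek unfolding delay_def by (auto simp: algebra_simps)
  moreover have "delay (delay \<nu> g) (real k) = delay \<nu> (g + real k)"
    unfolding delay_def by (auto simp: algebra_simps)
  ultimately show ?thesis using g by (intro exI[of _ "g + real k"]) auto
qed

lemma stability:
  fixes \<mu> \<nu> :: "'c::finite valuation"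
  assumes r: "r \<in> regions M" and r2: "r'' \<in> regions M" and mu: "\<mu> \<in> r" and e: "0 \<le> e"
    and me: "delay \<mu> e \<in> r''" and nu: "\<nu> \<in> r"
  shows "\<exists>d\<ge>0. delay \<nu> d \<in> r''"
proof -
  have eq: "region_equiv M \<mu> \<nu>" "nonneg_val \<nu>" using region_mem_equiv[OF r mu nu] by auto
  obtain d where d: "d \<ge> 0" "region_equiv M (delay \<mu> e) (delay \<nu> d)" using delay_any[OF eq(1) e] by blast
  have nn: "nonneg_val (delay \<nu> d)" using eq(2) d(1) by (simp add: nonneg_val_def delay_def)
  have "delay \<nu> d \<in> region_of M (delay \<mu> e)" using d nn by (simp add: region_of_def)
  thus ?thesis using region_of_eq[OF r2 me] d by auto
qed

lemma pw_lin:
  "play_weight G n ss (\<lambda>i. (1 - t) * a i + t * b i) \<delta>s =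
     (1 - t) * play_weight G n ss a \<delta>s + t * play_weight G n ss b \<delta>s"
proof -
  have "\<And>i. ((1 - t) * a i + t * b i) * real_of_int (wstate G (ss i)) + real_of_int (wtrans G (\<delta>s i)) =
     (1 - t) * (a i * real_of_int (wstate G (ss i)) + real_of_int (wtrans G (\<delta>s i))) +
     t * (b i * real_of_int (wstate G (ss i)) + real_of_int (wtrans G (\<delta>s i)))"
    by (simp add: algebra_simps)
  hence "play_weight G n ss (\<lambda>i. (1 - t) * a i + t * b i) \<delta>s =
     (\<Sum>i = 1..n. (1 - t) * (a i * real_of_int (wstate G (ss i)) + real_of_int (wtrans G (\<delta>s i))) +
     t * (b i * real_of_int (wstate G (ss i)) + real_of_int (wtrans G (\<delta>s i))))"
    unfolding play_weight_def by presburger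
  also have "\<dots> = (1 - t) * play_weight G n ss a \<delta>s + t * play_weight G n ss b \<delta>s"
  proof -
    define A where "A i = a i * real_of_int (wstate G (ss i)) + real_of_int (wtrans G (\<delta>s i))" for i
    define B where "B i = b i * real_of_int (wstate G (ss i)) + real_of_int (wtrans G (\<delta>s i))" for i
    have "(\<Sum>i = 1..n. (1 - t) * A i + t * B i) = (1 - t) * sum A {1..n} + t * sum B {1..n}"
      by (simp add: sum.distrib sum_distrib_left)
    moreover have "play_weight G n ss a \<delta>s = sum A {1..n}" "play_weight G n ss b \<delta>s = sum B {1..n}"
      by (simp_all add: play_weight_def A_def B_def)
    ultimately show ?thesis unfolding A_def B_def by simp
  qed
  finally show ?thesis .
qed


theorem lemma1:
  fixes G :: "('s, 'c::finite) wtg" and M n :: nat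
    and ss :: "nat \<Rightarrow> 's" and rs :: "nat \<Rightarrow> 'c valuation set"
    and \<delta>s :: "nat \<Rightarrow> ('s, 'c) transition"
    and \<nu>bar :: "nat \<Rightarrow> 'c valuation" and dbar :: "nat \<Rightarrow> real"
    and \<epsilon> :: real
  assumes "wf_wtg G M"
    and "is_region_cycle G M n ss rs \<delta>s"
    and "is_play True G n ss \<delta>s \<nu>bar dbar"
    and "follows_corners G M n rs \<delta>s \<nu>bar dbar"
    and "is_corner (\<nu>bar 0) (rs 1)" and "is_corner (\<nu>bar n) (rs 1)"
    and "\<epsilon> > 0"
  shows "\<exists>\<nu>s ds. is_play False G n ss \<delta>s \<nu>s ds \<and> follows M n rs \<nu>s \<and>
           \<bar>play_weight G n ss ds \<delta>s - play_weight G n ss dbar \<delta>s\<bar> \<le> \<epsilon>"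
proof -
  note cyc = assms(2)[unfolded is_region_cycle_def]
  have rsreg: "rs i \<in> regions M" if "1 \<le> i" "i \<le> Suc n" for i
  proof (cases "i = Suc n")
    case True thus ?thesis using cyc by simp
  next
    case False
    hence "i \<in> {1..n}" using that by auto
    thus ?thesis using cyc by (auto simp: reg_trans_def)
  qed
  have stp: "\<delta>s i \<in> Trans G \<and> src (\<delta>s i) = ss i \<and> tgt (\<delta>s i) = ss (Suc i) \<and> dbar i \<ge> 0 \<and>
      \<nu>bar i = reset (delay (\<nu>bar (i - 1)) (dbar i)) (resets_of (\<delta>s i))" if "i \<in> {1..n}" for i
    using assms(3) that unfolding is_play_def step_def by auto
  have "\<forall>i\<in>{1..n}. \<exists>r''. r'' \<in> regions M \<and>
        (\<exists>\<nu> \<in> rs i. \<exists>d \<ge> 0. delay \<nu> d \<in> r'') \<and>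
        (\<forall>\<nu> \<in> r''. sat \<nu> (guard_of (\<delta>s i))) \<and>
        (\<lambda>\<nu>. reset \<nu> (resets_of (\<delta>s i))) ` r'' = rs (Suc i) \<and>
        \<nu>bar (i - 1) \<in> closure (rs i) \<and> delay (\<nu>bar (i - 1)) (dbar i) \<in> closure r'' \<and>
        \<nu>bar i \<in> closure (rs (Suc i))"
    using assms(4) unfolding follows_corners_def by meson
  then obtain R where R: "\<And>i. i \<in> {1..n} \<Longrightarrow> R i \<in> regions M \<and>
        (\<exists>\<nu> \<in> rs i. \<exists>d \<ge> 0. delay \<nu> d \<in> R i) \<and>
        (\<forall>\<nu> \<in> R i. sat \<nu> (guard_of (\<delta>s i))) \<and>
        (\<lambda>\<nu>. reset \<nu> (resets_of (\<delta>s i))) ` R i = rs (Suc i) \<and>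
        \<nu>bar (i - 1) \<in> closure (rs i) \<and> delay (\<nu>bar (i - 1)) (dbar i) \<in> closure (R i) \<and>
        \<nu>bar i \<in> closure (rs (Suc i))"
    by metis
  obtain c where c: "rs 1 = region_of M c" "nonneg_val c" using cyc by (auto simp: regions_def)
  have p0: "c \<in> rs 1" using c region_of_self by simp
  define dsel where "dsel i v = (SOME d. 0 \<le> d \<and> delay v d \<in> R i)" for i v
  define pv where "pv = rec_nat c (\<lambda>i v. reset (delay v (dsel (Suc i) v)) (resets_of (\<delta>s (Suc i))))"
  define pd where "pd i = dsel i (pv (i - 1))" for i
  have pv0: "pv 0 = c" unfolding pv_def by simp
  have pvS: "pv (Suc i) = reset (delay (pv i) (dsel (Suc i) (pv i))) (resets_of (\<delta>s (Suc i)))" for i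
    unfolding pv_def by simp
  have dsel_ok: "0 \<le> dsel i v \<and> delay v (dsel i v) \<in> R i" if "i \<in> {1..n}" "v \<in> rs i" for i v
  proof -
    from R[OF that(1)] obtain \<mu> e where "\<mu> \<in> rs i" "e \<ge> 0" "delay \<mu> e \<in> R i" "R i \<in> regions M" by blast
    from stability[OF rsreg this(4) this(1,2,3) that(2)] that(1)
    have "\<exists>d. 0 \<le> d \<and> delay v d \<in> R i" by auto
    thus ?thesis unfolding dsel_def by (rule someI_ex)
  qed
  have pvin: "i \<le> n \<Longrightarrow> pv i \<in> rs (Suc i)" for i
  proof (induction i)
    case 0 thus ?case using p0 pv0 by simp
  next
    case (Suc i)
    hence j: "Suc i \<in> {1..n}" and "pv i \<in> rs (Suc i)" by auto
    from dsel_ok[OF j this(2)] have "delay (pv i) (dsel (Suc i) (pv i)) \<in> R (Suc i)" by simp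
    hence "pv (Suc i) \<in> (\<lambda>\<nu>. reset \<nu> (resets_of (\<delta>s (Suc i)))) ` R (Suc i)" unfolding pvS by blast
    thus ?case using R[OF j] by simp
  qed
  have pdok: "0 \<le> pd i \<and> delay (pv (i - 1)) (pd i) \<in> R i \<and>
      pv i = reset (delay (pv (i - 1)) (pd i)) (resets_of (\<delta>s i))" if i: "i \<in> {1..n}" for i
  proof -
    have "pv (i - 1) \<in> rs i" using pvin[of "i - 1"] i by auto
    from dsel_ok[OF i this] have "0 \<le> pd i \<and> delay (pv (i - 1)) (pd i) \<in> R i" unfolding pd_def .
    moreover have "pv i = reset (delay (pv (i - 1)) (pd i)) (resets_of (\<delta>s i))"
      using pvS[of "i - 1"] i unfolding pd_def by (cases i) auto
    ultimately show ?thesis by blast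
  qed
  define K where "K = \<bar>play_weight G n ss pd \<delta>s - play_weight G n ss dbar \<delta>s\<bar>"
  define s where "s = min 1 (\<epsilon> / (K + 1))"
  define t where "t = 1 - s"
  have K0: "K \<ge> 0" unfolding K_def by simp
  have s: "0 < s" "s \<le> 1" "s \<le> \<epsilon> / (K + 1)" using assms(7) K0 unfolding s_def by auto
  have t: "0 \<le> t" "t < 1" "1 - t = s" using s unfolding t_def by auto
  define \<nu>s where "\<nu>s i = (\<lambda>x. (1 - t) * pv i x + t * \<nu>bar i x)" for i
  define ds where "ds i = (1 - t) * pd i + t * dbar i" for i
  have clos_last: "\<nu>bar n \<in> closure (rs (Suc n))"
  proof (cases "n = 0")
    case True thus ?thesis using assms(5) by (simp add: is_corner_def)
  next
    case False thus ?thesis using R[of n] by auto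
  qed
  have inreg: "\<nu>s (i - 1) \<in> rs i" if i: "i \<in> {1..Suc n}" for i
  proof -
    have "\<nu>bar (i - 1) \<in> closure (rs i)"
    proof (cases "i = Suc n")
      case True thus ?thesis using clos_last by simp
    next
      case False hence "i \<in> {1..n}" using i by auto
      thus ?thesis using R by blast
    qed
    moreover have "pv (i - 1) \<in> rs i" using pvin[of "i - 1"] i by auto
    ultimately show ?thesis unfolding \<nu>s_def using region_comb[OF rsreg _ _ t(1,2)] i by auto
  qed
  have play: "is_play False G n ss \<delta>s \<nu>s ds"
    unfolding is_play_def
  proof (intro conjI ballI)
    show "nonneg_val (\<nu>s 0)" using inreg[of 1] region_mem_equiv(2)[OF rsreg[of 1]] by auto
  next
    fix i assume i: "i \<in> {1..n}"
    note P = pdok[OF i] and S = stp[OF i]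
    have dl: "delay (\<nu>s (i - 1)) (ds i) =
        (\<lambda>x. (1 - t) * delay (pv (i - 1)) (pd i) x + t * delay (\<nu>bar (i - 1)) (dbar i) x)"
      unfolding delay_def \<nu>s_def ds_def by (auto simp: algebra_simps)
    have din: "delay (\<nu>s (i - 1)) (ds i) \<in> R i"
      unfolding dl using region_comb[of "R i" M] R[OF i] P t(1,2) by blast
    have "ds i \<ge> 0" using P S t unfolding ds_def by simp
    moreover have "sat (delay (\<nu>s (i - 1)) (ds i)) (guard_of (\<delta>s i))" using din R[OF i] by blast
    moreover have "\<nu>s i = reset (delay (\<nu>s (i - 1)) (ds i)) (resets_of (\<delta>s i))"
    proof
      fix x
      show "\<nu>s i x = reset (delay (\<nu>s (i - 1)) (ds i)) (resets_of (\<delta>s i)) x"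
        unfolding dl using P S unfolding \<nu>s_def reset_def by auto
    qed
    ultimately show "step False G (ss i) (\<nu>s (i - 1)) (ds i) (\<delta>s i) (ss (Suc i)) (\<nu>s i)"
      using S unfolding step_def by simp
  qed
  have fol: "follows M n rs \<nu>s"
    unfolding follows_def
  proof
    fix i assume i: "i \<in> {1..Suc n}"
    show "region_of M (\<nu>s (i - 1)) = rs i"
      using region_of_eq[OF rsreg inreg[OF i]] i by auto
  qed
  have "play_weight G n ss ds \<delta>s = (1 - t) * play_weight G n ss pd \<delta>s + t * play_weight G n ss dbar \<delta>s"
    unfolding ds_def by (rule pw_lin)
  hence "play_weight G n ss ds \<delta>s - play_weight G n ss dbar \<delta>s =
      s * (play_weight G n ss pd \<delta>s - play_weight G n ss dbar \<delta>s)"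
    using t unfolding t_def by (simp add: algebra_simps)
  hence "\<bar>play_weight G n ss ds \<delta>s - play_weight G n ss dbar \<delta>s\<bar> = s * K"
    unfolding K_def using s by (simp add: abs_mult)
  also have "\<dots> \<le> \<epsilon> / (K + 1) * K" using mult_right_mono[OF s(3) K0] .
  also have "\<dots> \<le> \<epsilon>"
  proof -
    have "\<epsilon> / (K + 1) * K = \<epsilon> * (K / (K + 1))" by simp
    also have "\<dots> \<le> \<epsilon> * 1" using K0 assms(7) by (intro mult_left_mono) auto
    finally show ?thesis by simp
  qed
  finally show ?thesis using play fol by blast
qed

end
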